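(* Let $q$ be a nonzero scalar and let $\mathcal A$ be an associative unital algebra over a field containing $q$, with elements $\psi,\chi$ and an invertible element $\Phi$ (standing for $q^{\phi/2}$) satisfying $$\Phi\psi=q\,\psi\Phi,\qquad \Phi\chi=q\,\chi\Phi,\qquad \psi\chi=\chi\psi.$$ Set $B=\Phi+\psi\Phi^{-1}\chi$ (standing for $q^{\beta/2}$) and assume $B$ is invertible; define $$\alpha=\Phi^{-1}\chi\Phi^{-1}\big(1+\psi\Phi^{-1}\chi\Phi^{-1}\big)^{-1},\qquad \gamma=\big(1+\Phi^{-1}\psi\Phi^{-1}\chi\big)^{-1}\Phi^{-1}\psi\Phi^{-1}$$ (so that $\alpha=\Phi^{-1}\chi B^{-1}$ and $\gamma=B^{-1}\psi\Phi^{-1}$, i.e. $B\gamma=\psi\Phi^{-1}$ and $\alpha B=\Phi^{-1}\chi$). Then $$\alpha B\gamma+B^{-1}=\Phi^{-1},$$ and $$B^2\alpha=q^2\alpha B^2,\qquad B^2\gamma=q^2\gamma B^2,\qquad \alpha\gamma=\gamma\alpha.$$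
   Context: Interpretation: these formulas equate, in the fundamental representation of $SL_q(2)$, the matrices $\begin{pmatrix} q^{\phi/2}+\psi q^{-\phi/2}\chi & \psi q^{-\phi/2}\\ q^{-\phi/2}\chi & q^{-\phi/2}\end{pmatrix}$ and $\begin{pmatrix} q^{\beta/2} & q^{\beta/2}\gamma\\ \alpha q^{\beta/2} & \alpha q^{\beta/2}\gamma+q^{-\beta/2}\end{pmatrix}$; here $\Phi=q^{\phi/2}$, $B=q^{\beta/2}$, and $B^2=q^{\beta}$. The relation $\Phi\psi=q\psi\Phi$ is the square-root form of $q^{\phi}\psi=q^2\psi q^{\phi}$. *)

theory Defs
  imports Main "HOL.Modules"
begin

definition algebra_over :: "('k::field \<Rightarrow> 'a::ring_1 \<Rightarrow> 'a) \<Rightarrow> bool" where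
  "algebra_over scale \<longleftrightarrow> module scale \<and>
     (\<forall>c x y. scale c (x * y) = scale c x * y) \<and>
     (\<forall>c x y. scale c (x * y) = x * scale c y)"

definition invertible_el :: "'a::ring_1 \<Rightarrow> bool" where
  "invertible_el x \<longleftrightarrow> (\<exists>y. x * y = 1 \<and> y * x = 1)"

text \<open>Two-sided inverse in a ring (meaningful when the element is invertible).\<close>
definition inv_el :: "'a::ring_1 \<Rightarrow> 'a" where
  "inv_el x = (THE y. x * y = 1 \<and> y * x = 1)"

end

theory Submission
  imports Defs
begin

lemma core:
  fixes Q Qi P Pi s c B Bi :: "'a::ring_1"
  assumes QC: "\<And>x. Q*x = x*Q" and QiC: "\<And>x. Qi*x = x*Qi" and QQi: "Q*Qi=1"
    and PPi: "P*Pi=1" and PiP: "Pi*P=1"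
    and r1: "P*s = Q*(s*P)" and r2: "P*c = Q*(c*P)" and r3: "s*c=c*s"
    and Bdef: "B = P + s*Pi*c" and BBi: "B*Bi=1" and BiB: "Bi*B=1"
  shows "(Pi*c*Bi)*B*(Bi*s*Pi) + Bi = Pi"
    and "B*(Pi*c*Bi) = Q*((Pi*c*Bi)*B)"
    and "B*(Bi*s*Pi) = Q*((Bi*s*Pi)*B)"
    and "(Pi*c*Bi)*(Bi*s*Pi) = (Bi*s*Pi)*(Pi*c*Bi)"
proof -
  have QL: "x*(Q*y) = Q*(x*y)" for x y by (metis QC mult.assoc)
  have QiL: "x*(Qi*y) = Qi*(x*y)" for x y by (metis QiC mult.assoc)
  have QQi': "Q*(Qi*x) = x" for x by (metis QQi mult.assoc mult_1_left)
  have QiQ': "Qi*(Q*x) = x" for x by (metis QQi QC QiC mult.assoc mult_1_left)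
  have PPi': "P*(Pi*x) = x" for x by (metis PPi mult.assoc mult_1_left)
  have PiP': "Pi*(P*x) = x" for x by (metis PiP mult.assoc mult_1_left)
  have BBi': "B*(Bi*x) = x" for x by (metis BBi mult.assoc mult_1_left)
  have BiB': "Bi*(B*x) = x" for x by (metis BiB mult.assoc mult_1_left)
  have sPi: "s*Pi = Q*(Pi*s)"
  proof -
    have "s*Pi = Pi*(P*s*Pi)" by (simp only: mult.assoc PiP')
    also have "\<dots> = Q*(Pi*s)" by (simp only: r1 mult.assoc QL PiP' PPi mult_1_right)
    finally show ?thesis .
  qed
  have cPi: "c*Pi = Q*(Pi*c)"
  proof -
    have "c*Pi = Pi*(P*c*Pi)" by (simp only: mult.assoc PiP')
    also have "\<dots> = Q*(Pi*c)" by (simp only: r2 mult.assoc QL PiP' PPi mult_1_right)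
    finally show ?thesis .
  qed

  have L1a: "P*(s*Pi) = Q*s"
  proof -
    have "P*(s*Pi) = (P*s)*Pi" by (simp only: mult.assoc)
    also have "\<dots> = Q*s" by (simp only: r1 mult.assoc PPi mult_1_right)
    finally show ?thesis .
  qed
  have L1b: "s*(Pi*(c*(s*Pi))) = Q*(s*(Pi*(s*(Pi*c))))"
  proof -
    have "c*(s*Pi) = s*(c*Pi)" by (simp only: r3 flip: mult.assoc)
    also have "\<dots> = Q*(s*(Pi*c))" by (simp only: cPi QL)
    finally show ?thesis by (simp only: QL)
  qed
  have L1: "B*(s*Pi) = Q*(s*Pi*B)"
  proof -
    have "B*(s*Pi) = P*(s*Pi) + s*(Pi*(c*(s*Pi)))" by (simp only: Bdef distrib_right mult.assoc)
    also have "\<dots> = Q*s + Q*(s*(Pi*(s*(Pi*c))))" by (simp only: L1a L1b)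
    also have "\<dots> = Q*(s*(Pi*P) + s*(Pi*(s*(Pi*c))))" by (simp only: PiP mult_1_right distrib_left)
    also have "\<dots> = Q*(s*Pi*B)" by (simp only: Bdef distrib_left mult.assoc)
    finally show ?thesis .
  qed
  have L2a: "Q*(Pi*(c*P)) = c"
  proof -
    have "Q*(Pi*(c*P)) = (Q*(Pi*c))*P" by (simp only: mult.assoc)
    also have "\<dots> = c" by (simp only: cPi[symmetric] mult.assoc PiP mult_1_right)
    finally show ?thesis .
  qed
  have L2b: "Q*(Pi*(c*(s*(Pi*c)))) = s*(Pi*(c*(Pi*c)))"
  proof -
    have "Q*(Pi*(c*(s*(Pi*c)))) = Q*(Pi*(s*(c*(Pi*c))))" by (simp only: r3 flip: mult.assoc)
    also have "\<dots> = s*(Pi*(c*(Pi*c)))" by (simp only: sPi flip: mult.assoc)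
    finally show ?thesis .
  qed
  have L2: "B*(Pi*c) = Q*(Pi*c*B)"
  proof -
    have "B*(Pi*c) = P*(Pi*c) + s*(Pi*(c*(Pi*c)))" by (simp only: Bdef distrib_right mult.assoc)
    also have "\<dots> = Q*(Pi*(c*P)) + Q*(Pi*(c*(s*(Pi*c))))" by (simp only: L2a L2b PPi')
    also have "\<dots> = Q*(Pi*c*B)" by (simp only: Bdef distrib_left mult.assoc)
    finally show ?thesis .
  qed
  show G2: "B*(Pi*c*Bi) = Q*((Pi*c*Bi)*B)"
  proof -
    have "B*(Pi*c*Bi) = (B*(Pi*c))*Bi" by (simp only: mult.assoc)
    also have "\<dots> = Q*(Pi*c)" by (simp only: L2 mult.assoc BBi mult_1_right)
    also have "\<dots> = Q*((Pi*c*Bi)*B)" by (simp only: mult.assoc BiB mult_1_right)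
    finally show ?thesis .
  qed
  show G3: "B*(Bi*s*Pi) = Q*((Bi*s*Pi)*B)"
  proof -
    have "B*(Bi*s*Pi) = s*Pi" by (simp only: mult.assoc BBi')
    also have "\<dots> = Bi*(B*(s*Pi))" by (simp only: BiB')
    also have "\<dots> = Q*(Bi*(s*(Pi*B)))" by (simp only: L1 mult.assoc QL)
    finally show ?thesis by (simp only: mult.assoc)
  qed
  have L1': "s*(Pi*B) = Qi*(B*(s*Pi))" by (simp only: L1 mult.assoc QiQ')
  show G1: "(Pi*c*Bi)*B*(Bi*s*Pi) + Bi = Pi"
  proof -
    have "((Pi*c*Bi)*B*(Bi*s*Pi) + Bi)*B = Pi*(c*(Bi*(s*(Pi*B)))) + 1"
      by (simp only: distrib_right mult.assoc BiB' BiB mult_1_left)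
    also have "\<dots> = Qi*(Pi*(c*(s*Pi))) + 1" by (simp only: L1' QiL BiB')
    also have "\<dots> = Pi*(s*(Pi*c)) + 1"
    proof -
      have "Pi*(c*(s*Pi)) = Q*(Pi*(s*(Pi*c)))"
      proof -
        have "Pi*(c*(s*Pi)) = Pi*(s*(c*Pi))" by (simp only: r3 flip: mult.assoc)
        also have "\<dots> = Q*(Pi*(s*(Pi*c)))" by (simp only: cPi QL)
        finally show ?thesis .
      qed
      thus ?thesis by (simp only: QiQ')
    qed
    also have "\<dots> = Pi*B" by (simp add: Bdef distrib_left mult.assoc PiP)
    finally have "((Pi*c*Bi)*B*(Bi*s*Pi) + Bi)*B = Pi*B" .
    hence "((Pi*c*Bi)*B*(Bi*s*Pi) + Bi)*B*Bi = Pi*B*Bi" by simp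
    thus ?thesis by (simp only: mult.assoc BBi mult_1_right)
  qed
  have aBi: "Pi*(c*(Bi*Bi)) = Q*(Bi*(Pi*(c*Bi)))"
  proof -
    have "Pi*(c*(Bi*Bi)) = Bi*(B*(Pi*c*Bi))*Bi" by (simp only: BiB' mult.assoc)
    also have "\<dots> = Bi*(Q*(Pi*c*Bi*B))*Bi" by (simp only: G2)
    also have "\<dots> = Q*(Bi*(Pi*(c*Bi)))" by (simp only: mult.assoc QL BBi mult_1_right)
    finally show ?thesis .
  qed
  have BisPi: "Bi*(s*Pi) = Qi*(s*(Pi*Bi))"
  proof -
    have "Qi*(s*(Pi*Bi)) = Qi*(Bi*(B*(s*(Pi*Bi))))" by (simp only: BiB')
    also have "\<dots> = Qi*(Bi*((B*(s*Pi))*Bi))" by (simp only: mult.assoc)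
    also have "\<dots> = Qi*(Bi*(Q*(s*Pi*B)*Bi))" by (simp only: L1)
    also have "\<dots> = Bi*(s*Pi)" by (simp only: mult.assoc QL QiQ' QQi' BBi mult_1_right)
    finally show ?thesis by (rule sym)
  qed
  show G4: "(Pi*c*Bi)*(Bi*s*Pi) = (Bi*s*Pi)*(Pi*c*Bi)"
  proof -
    have "(Pi*c*Bi)*(Bi*s*Pi) = Pi*(c*(Bi*Bi))*(s*Pi)" by (simp only: mult.assoc)
    also have "\<dots> = Q*(Bi*(Pi*(c*(Bi*(s*Pi)))))" by (simp only: aBi mult.assoc QL)
    also have "\<dots> = Bi*(Pi*(c*(s*(Pi*Bi))))" by (simp only: BisPi QiL QQi' QiQ')
    also have "\<dots> = Bi*(s*(Pi*(Pi*(c*Bi))))"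
    proof -
      have "Pi*(c*(s*(Pi*Bi))) = s*(Pi*(Pi*(c*Bi)))"
      proof -
        have "Pi*(c*(s*Pi)) = Q*(Pi*(s*(Pi*c)))"
      proof -
        have "Pi*(c*(s*Pi)) = Pi*(s*(c*Pi))" by (simp only: r3 flip: mult.assoc)
        also have "\<dots> = Q*(Pi*(s*(Pi*c)))" by (simp only: cPi QL)
        finally show ?thesis .
      qed
        also have "\<dots> = s*(Pi*(Pi*c))"
        proof -
          have "s*(Pi*(Pi*c)) = (s*Pi)*(Pi*c)" by (simp only: mult.assoc)
          also have "\<dots> = Q*(Pi*(s*(Pi*c)))" by (simp only: sPi mult.assoc)
          finally show ?thesis by (rule sym)
        qed
        finally have "Pi*(c*(s*Pi))*Bi = s*(Pi*(Pi*c))*Bi" by simp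
        thus ?thesis by (simp only: mult.assoc)
      qed
      thus ?thesis by simp
    qed
    also have "\<dots> = (Bi*s*Pi)*(Pi*c*Bi)" by (simp only: mult.assoc)
    finally show ?thesis .
  qed
qed

lemma inv_el_eq:
  fixes x :: "'a::ring_1"
  assumes "invertible_el x"
  shows "x * inv_el x = 1" "inv_el x * x = 1"
proof -
  obtain y where y: "x*y = 1" "y*x = 1" using assms unfolding invertible_el_def by blast
  have u: "z = y" if "x*z = 1 \<and> z*x = 1" for z
  proof -
    have "z = (y*x)*z" using y by simp
    also have "\<dots> = y*(x*z)" by (rule mult.assoc)
    also have "\<dots> = y" using that by simp
    finally show ?thesis .
  qed
  have "inv_el x = y" unfolding inv_el_def
    by (rule the_equality) (use y in simp, erule u)
  thus "x * inv_el x = 1" "inv_el x * x = 1" using y by auto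
qed

lemma inv_el_unique:
  fixes x :: "'a::ring_1"
  assumes "x*y = 1" "y*x = 1"
  shows "inv_el x = y"
proof -
  have u: "z = y" if "x*z = 1 \<and> z*x = 1" for z
  proof -
    have "z = (y*x)*z" using assms by simp
    also have "\<dots> = y*(x*z)" by (rule mult.assoc)
    also have "\<dots> = y" using that by simp
    finally show ?thesis .
  qed
  show ?thesis unfolding inv_el_def
    by (rule the_equality) (use assms in simp, erule u)
qed

theorem mainTheorem2:
  fixes scale :: "'k::field \<Rightarrow> 'a::ring_1 \<Rightarrow> 'a"
    and q :: 'k and \<psi> \<chi> \<Phi> :: 'a
  assumes alg: "algebra_over scale"
    and q: "q \<noteq> 0"
    and Phi_inv: "invertible_el \<Phi>"
    and r1: "\<Phi> * \<psi> = scale q (\<psi> * \<Phi>)"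
    and r2: "\<Phi> * \<chi> = scale q (\<chi> * \<Phi>)"
    and r3: "\<psi> * \<chi> = \<chi> * \<psi>"
    and B_inv: "invertible_el (\<Phi> + \<psi> * inv_el \<Phi> * \<chi>)"
  shows "let B = \<Phi> + \<psi> * inv_el \<Phi> * \<chi>;
             \<alpha> = inv_el \<Phi> * \<chi> * inv_el \<Phi> * inv_el (1 + \<psi> * inv_el \<Phi> * \<chi> * inv_el \<Phi>);
             \<gamma> = inv_el (1 + inv_el \<Phi> * \<psi> * inv_el \<Phi> * \<chi>) * inv_el \<Phi> * \<psi> * inv_el \<Phi>
         in \<alpha> * B * \<gamma> + inv_el B = inv_el \<Phi>
          \<and> B^2 * \<alpha> = scale (q^2) (\<alpha> * B^2)
          \<and> B^2 * \<gamma> = scale (q^2) (\<gamma> * B^2)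
          \<and> \<alpha> * \<gamma> = \<gamma> * \<alpha>"
proof -
  have M: "module scale" and SL: "\<And>c x y. scale c (x * y) = scale c x * y"
    and SR: "\<And>c x y. scale c (x * y) = x * scale c y"
    using alg unfolding algebra_over_def by auto
  define Q where "Q = scale q 1"
  define Qi where "Qi = scale (inverse q) 1"
  have QC: "Q*x = x*Q" for x
  proof -
    have "Q*x = scale q (1*x)" unfolding Q_def by (rule SL[symmetric])
    also have "\<dots> = scale q (x*1)" by simp
    also have "\<dots> = x*Q" unfolding Q_def by (rule SR)
    finally show ?thesis .
  qed
  have QiC: "Qi*x = x*Qi" for x
  proof -
    have "Qi*x = scale (inverse q) (1*x)" unfolding Qi_def by (rule SL[symmetric])
    also have "\<dots> = scale (inverse q) (x*1)" by simp
    also have "\<dots> = x*Qi" unfolding Qi_def by (rule SR)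
    finally show ?thesis .
  qed
  have QQi: "Q*Qi = 1"
  proof -
    have "Q*Qi = scale q Qi" unfolding Q_def using SL[of q 1 Qi] by simp
    also have "\<dots> = scale (q * inverse q) 1" unfolding Qi_def using module.scale_scale[OF M] by simp
    also have "\<dots> = 1" using q module.scale_one[OF M] by simp
    finally show ?thesis .
  qed
  have sq: "scale q x = Q*x" for x unfolding Q_def using SL[of q 1 x] by simp
  have sq2: "scale (q^2) x = Q*(Q*x)" for x
    using module.scale_scale[OF M, of q q x] by (simp add: power2_eq_square sq)
  define P where "P = \<Phi>"
  define Pi where "Pi = inv_el \<Phi>"
  define B where "B = \<Phi> + \<psi> * inv_el \<Phi> * \<chi>"
  define Bi where "Bi = inv_el B"
  have PPi: "P*Pi = 1" and PiP: "Pi*P = 1" using inv_el_eq[OF Phi_inv] unfolding P_def Pi_def by auto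
  have BBi: "B*Bi = 1" and BiB: "Bi*B = 1" using inv_el_eq[OF B_inv] unfolding B_def Bi_def by auto
  have Bdef: "B = P + \<psi>*Pi*\<chi>" unfolding B_def P_def Pi_def ..
  note C = core[OF QC QiC QQi PPi PiP r1[folded P_def, unfolded sq] r2[folded P_def, unfolded sq] r3 Bdef BBi BiB]
  have QL: "x*(Q*y) = Q*(x*y)" for x y by (metis QC mult.assoc)
  have PiP': "Pi*(P*x) = x" for x by (simp add: PiP flip: mult.assoc)
  have PPi': "P*(Pi*x) = x" for x by (simp add: PPi flip: mult.assoc)
  have e1: "inv_el (1 + \<psi>*Pi*\<chi>*Pi) = P*Bi"
  proof -
    have "1 + \<psi>*Pi*\<chi>*Pi = B*Pi" by (simp add: Bdef distrib_right PPi)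
    moreover have "(B*Pi)*(P*Bi) = 1" by (metis mult.assoc PiP mult_1_left BBi)
    moreover have "(P*Bi)*(B*Pi) = 1" by (metis mult.assoc BiB mult_1_left PPi)
    ultimately show ?thesis using inv_el_unique by metis
  qed
  have e2: "inv_el (1 + Pi*\<psi>*Pi*\<chi>) = Bi*P"
  proof -
    have "1 + Pi*\<psi>*Pi*\<chi> = Pi*B" by (simp add: Bdef distrib_left PiP mult.assoc)
    moreover have "(Pi*B)*(Bi*P) = 1" by (metis mult.assoc BBi mult_1_left PiP)
    moreover have "(Bi*P)*(Pi*B) = 1" by (metis mult.assoc PPi mult_1_left BiB)
    ultimately show ?thesis using inv_el_unique by metis
  qed
  have al: "Pi*\<chi>*Pi*inv_el (1 + \<psi>*Pi*\<chi>*Pi) = Pi*\<chi>*Bi"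
    unfolding e1 by (simp add: mult.assoc PiP')
  have ga: "inv_el (1 + Pi*\<psi>*Pi*\<chi>)*Pi*\<psi>*Pi = Bi*\<psi>*Pi"
    unfolding e2 by (simp add: mult.assoc PPi')
  have G2': "B^2*(Pi*\<chi>*Bi) = Q*(Q*((Pi*\<chi>*Bi)*B^2))"
  proof -
    have "B^2*(Pi*\<chi>*Bi) = B*(B*(Pi*\<chi>*Bi))" by (simp add: power2_eq_square mult.assoc)
    also have "\<dots> = B*(Q*((Pi*\<chi>*Bi)*B))" by (simp only: C(2))
    also have "\<dots> = Q*((B*(Pi*\<chi>*Bi))*B)" by (simp only: QL mult.assoc)
    also have "\<dots> = Q*(Q*((Pi*\<chi>*Bi)*B)*B)" by (simp only: C(2))
    also have "\<dots> = Q*(Q*((Pi*\<chi>*Bi)*B^2))" by (simp only: mult.assoc power2_eq_square)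
    finally show ?thesis .
  qed
  have G3': "B^2*(Bi*\<psi>*Pi) = Q*(Q*((Bi*\<psi>*Pi)*B^2))"
  proof -
    have "B^2*(Bi*\<psi>*Pi) = B*(B*(Bi*\<psi>*Pi))" by (simp add: power2_eq_square mult.assoc)
    also have "\<dots> = B*(Q*((Bi*\<psi>*Pi)*B))" by (simp only: C(3))
    also have "\<dots> = Q*((B*(Bi*\<psi>*Pi))*B)" by (simp only: QL mult.assoc)
    also have "\<dots> = Q*(Q*((Bi*\<psi>*Pi)*B)*B)" by (simp only: C(3))
    also have "\<dots> = Q*(Q*((Bi*\<psi>*Pi)*B^2))" by (simp only: mult.assoc power2_eq_square)
    finally show ?thesis .
  qed
  show ?thesis
    unfolding Let_def
    unfolding B_def[symmetric]
    unfolding Bi_def[symmetric]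
    unfolding Pi_def[symmetric]
    unfolding al ga sq2
    using C(1) C(4) G2' G3' by (intro conjI) assumption+
qed

end
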